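(* Let $n\ge2$, $l\ge1$, $a_1,\ldots,a_l\ge2$ be integers with $a_1+\cdots+a_l=n$. The power series $I_p(q)$, $p=0,1,\ldots,n-1$, satisfy \begin{align*} &I_p(q)=1\quad\text{for } p=n-l+1,\ldots,n-1,\\ &I_p(q)=I_{n-l-p}(q)\quad\text{for } p=0,1,\ldots,n-l,\\ &I_0(q)I_1(q)\cdots I_{n-l}(q)=(1-\mathbf a^{\mathbf a}q)^{-1},\\ &I_0(q)^{n-l}I_1(q)^{n-l-1}\cdots I_{n-l-1}(q)^1I_{n-l}(q)^0=(1-\mathbf a^{\mathbf a}q)^{-(n-l)/2}. \end{align*}
   Context: $\mathbf a^{\mathbf a}=\prod_ka_k^{a_k}$. Let $\mathcal P\subset1+q\,\mathbb Q(w)[[q]]$ be the power series in $q$ with constant term $1$ whose coefficients are rational functions of $w$ regular at $w=0$, and $\mathbf M:\mathcal P\to\mathcal P$, $\mathbf MF(w,q)=\left\{1+\frac{q}{w}\frac{d}{dq}\right\}\frac{F(w,q)}{F(0,q)}$. With $\tilde{\mathcal F}(w,q)=\sum_{d\ge0}q^d\frac{\prod_{k=1}^l\prod_{r=1}^{a_kd}(a_kw+r)}{\prod_{r=1}^d(w+r)^n}$, define $I_p(q)=\mathbf M^p\tilde{\mathcal F}(0,q)$ for $p=0,\ldots,n-1$. *)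

theory Defs
  imports "HOL-Computational_Algebra.Formal_Power_Series"
begin

text \<open>Power series in q whose coefficients are (expansions at w = 0 of) functions of w
  regular at w = 0 are modelled as elements of Q[[w]][[q]], i.e. type rat fps fps:
  the outer variable is q, the inner variable is w.\<close>

definition liftq :: "rat fps \<Rightarrow> rat fps fps" where
  "liftq f = Abs_fps (\<lambda>d. fps_const (fps_nth f d))"

definition at_w0 :: "rat fps fps \<Rightarrow> rat fps" where
  "at_w0 F = Abs_fps (\<lambda>d. fps_nth (fps_nth F d) 0)"

text \<open>The operator M F = (1 + (q/w) d/dq) (F(w,q) / F(0,q)).
  Division by w is fps_shift 1 on each coefficient in w (exact on the class P,
  since q d/dq of F/F(0,q) vanishes at w = 0).\<close>
definition opM :: "rat fps fps \<Rightarrow> rat fps fps" where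
  "opM F = (let G = F * liftq (inverse (at_w0 F))
            in G + Abs_fps (\<lambda>d. fps_shift 1 (of_nat d * fps_nth G d)))"

definition tildeF :: "nat \<Rightarrow> (nat \<Rightarrow> nat) \<Rightarrow> nat \<Rightarrow> rat fps fps" where
  "tildeF l a n = Abs_fps (\<lambda>d.
      (\<Prod>k=1..l. \<Prod>r=1..a k * d. fps_const (of_nat (a k)) * fps_X + fps_const (of_nat r))
      * inverse (\<Prod>r=1..d. (fps_X + fps_const (of_nat r)) ^ n))"

definition Iser :: "nat \<Rightarrow> (nat \<Rightarrow> nat) \<Rightarrow> nat \<Rightarrow> nat \<Rightarrow> rat fps" where
  "Iser l a n p = at_w0 ((opM ^^ p) (tildeF l a n))"

definition aa :: "nat \<Rightarrow> (nat \<Rightarrow> nat) \<Rightarrow> nat" where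
  "aa l a = (\<Prod>k=1..l. a k ^ a k)"

end

theory Submission
  imports Defs
begin
unbundle fps_syntax

definition W :: "rat fps fps" where "W = fps_const fps_X"
definition th :: "rat fps fps \<Rightarrow> rat fps fps" where
  "th F = Abs_fps (\<lambda>d. (fps_X + of_nat d) * F $ d)"
definition Dq :: "rat fps \<Rightarrow> rat fps" where
  "Dq g = Abs_fps (\<lambda>d. of_nat d * g $ d)"
definition thD :: "rat \<Rightarrow> rat fps \<Rightarrow> rat fps" where
  "thD s g = Abs_fps (\<lambda>d. (s + of_nat d) * g $ d)"

lemma th_nth[simp]: "th F $ d = (fps_X + of_nat d) * F $ d" by (simp add: th_def)
lemma Dq_nth[simp]: "Dq g $ d = of_nat d * g $ d" by (simp add: Dq_def)
lemma thD_nth[simp]: "thD s g $ d = (s + of_nat d) * g $ d" by (simp add: thD_def)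
lemma liftq_nth[simp]: "liftq c $ d = fps_const (c $ d)" by (simp add: liftq_def)
lemma at_w0_nth[simp]: "at_w0 F $ d = F $ d $ 0" by (simp add: at_w0_def)

lemma liftq_mult_nth: "(liftq c * H) $ d = (\<Sum>i=0..d. fps_const (c$i) * H $ (d-i))"
  by (simp add: fps_mult_nth)

lemma fps_const_sum: "fps_const (sum f S) = (\<Sum>i\<in>S. fps_const (f i))"
  by (rule fps_ext) (simp add: fps_sum_nth)

lemma liftq_mult: "liftq (c * e) = liftq c * liftq e"
  by (rule fps_ext) (simp add: fps_mult_nth fps_const_sum)

lemma liftq_1[simp]: "liftq 1 = 1"
  by (rule fps_ext) (simp add: fps_one_nth)
lemma liftq_0[simp]: "liftq 0 = 0"
  by (rule fps_ext) simp
lemma liftq_add: "liftq (c + e) = liftq c + liftq e"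
  by (rule fps_ext) simp
lemma liftq_diff: "liftq (c - e) = liftq c - liftq e"
  by (rule fps_ext) simp
lemma liftq_const: "liftq (fps_const r) = fps_const (fps_const r)"
  by (rule fps_ext) simp

lemma at_w0_mult: "at_w0 (A * B) = at_w0 A * at_w0 B"
  by (rule fps_ext) (simp add: fps_mult_nth fps_sum_nth)
lemma at_w0_liftq[simp]: "at_w0 (liftq c) = c"
  by (rule fps_ext) simp
lemma at_w0_add: "at_w0 (A + B) = at_w0 A + at_w0 B"
  by (rule fps_ext) simp
lemma at_w0_1[simp]: "at_w0 1 = 1"
  by (rule fps_ext) (simp add: fps_one_nth)

lemma th_liftq_mult: "th (liftq c * H) = liftq c * th H + liftq (Dq c) * H"
proof (rule fps_ext)
  fix d
  have "th (liftq c * H) $ d = (\<Sum>i=0..d. (fps_X + of_nat d) * (fps_const (c$i) * H $ (d-i)))"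
    by (simp add: liftq_mult_nth sum_distrib_left)
  also have "\<dots> = (\<Sum>i=0..d. fps_const (c$i) * ((fps_X + of_nat (d-i)) * H $ (d-i))
       + fps_const (of_nat i * c$i) * H $ (d-i))"
  proof (rule sum.cong)
    fix i assume "i \<in> {0..d}"
    then have dd: "(of_nat d :: rat fps) = of_nat (d-i) + of_nat i" by (simp flip: of_nat_add)
    have e: "fps_const (of_nat i * c$i) = (of_nat i :: rat fps) * fps_const (c$i)"
      by (simp flip: fps_of_nat)
    show "(fps_X + of_nat d) * (fps_const (c$i) * H $ (d-i)) = fps_const (c$i) * ((fps_X + of_nat (d-i)) * H $ (d-i))
       + fps_const (of_nat i * c$i) * H $ (d-i)"
      unfolding dd e by (simp only: ring_distribs mult_ac add_ac)
  qed simp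
  also have "\<dots> = (liftq c * th H + liftq (Dq c) * H) $ d"
    by (simp add: liftq_mult_nth sum.distrib)
  finally show "th (liftq c * H) $ d = (liftq c * th H + liftq (Dq c) * H) $ d" .
qed

lemma thD_mult: "thD s (c * g) = c * thD s g + Dq c * g"
proof (rule fps_ext)
  fix d
  have "thD s (c * g) $ d = (\<Sum>i=0..d. (s + of_nat d) * (c$i * g $ (d-i)))"
    by (simp add: fps_mult_nth sum_distrib_left)
  also have "\<dots> = (\<Sum>i=0..d. c$i * ((s + of_nat (d-i)) * g $ (d-i))
       + (of_nat i * c$i) * g $ (d-i))"
  proof (rule sum.cong)
    fix i assume "i \<in> {0..d}"
    then have dd: "(of_nat d :: rat) = of_nat (d-i) + of_nat i" by (simp flip: of_nat_add)
    show "(s + of_nat d) * (c$i * g $ (d-i)) = c$i * ((s + of_nat (d-i)) * g $ (d-i))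
       + (of_nat i * c$i) * g $ (d-i)"
      unfolding dd by (simp only: ring_distribs mult_ac add_ac)
  qed simp
  also have "\<dots> = (c * thD s g + Dq c * g) $ d"
    by (simp add: fps_mult_nth sum.distrib)
  finally show "thD s (c * g) $ d = (c * thD s g + Dq c * g) $ d" .
qed

lemma th_add: "th (F + G) = th F + th G" by (rule fps_ext) (simp add: algebra_simps)
lemma th_diff: "th (F - G) = th F - th G" by (rule fps_ext) (simp add: algebra_simps)
lemma th_0[simp]: "th 0 = 0" by (rule fps_ext) simp
lemma thD_add: "thD s (F + G) = thD s F + thD s G" by (rule fps_ext) (simp add: algebra_simps)
lemma thD_diff: "thD s (F - G) = thD s F - thD s G" by (rule fps_ext) (simp add: algebra_simps)
lemma thD_0[simp]: "thD s 0 = 0" by (rule fps_ext) simp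
lemma th_W: "th (W * F) = W * th F"
  by (rule fps_ext) (simp add: W_def algebra_simps)
lemma th_Wpow: "th (W^j * F) = W^j * th F"
  by (induction j) (simp_all add: th_W mult.assoc)
lemma th_pow_nth: "((th ^^ i) F) $ d = (fps_X + of_nat d)^i * F $ d"
  by (induction i) auto
lemma thD_pow_nth: "((thD s ^^ i) F) $ d = (s + of_nat d)^i * F $ d"
  by (induction i) auto
lemma thD_const: "thD s (fps_const c * g) = fps_const c * thD s g"
  by (rule fps_ext) (simp add: algebra_simps)
lemma thD_pow_1: "(thD s ^^ i) 1 = fps_const (s^i)"
  by (rule fps_ext) (simp add: thD_pow_nth)

lemma X_shift1: "h $ 0 = 0 \<Longrightarrow> fps_X * fps_shift 1 (h :: rat fps) = h"
  by (rule fps_ext) (auto simp: not0_implies_Suc)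

definition Gof :: "rat fps fps \<Rightarrow> rat fps fps" where
  "Gof F = F * liftq (inverse (at_w0 F))"

lemma opM_Gof: "opM F = Gof F + Abs_fps (\<lambda>d. fps_shift 1 (of_nat d * Gof F $ d))"
  by (simp add: opM_def Gof_def Let_def)

lemma at_w0_Gof: "F $ 0 $ 0 \<noteq> 0 \<Longrightarrow> at_w0 (Gof F) = 1"
  unfolding Gof_def at_w0_mult at_w0_liftq by (rule inverse_mult_eq_1') simp

lemma Gof_0: "F $ 0 = 1 \<Longrightarrow> Gof F $ 0 = 1"
  by (simp add: Gof_def)

lemma opM_0: "F $ 0 = 1 \<Longrightarrow> opM F $ 0 = 1"
  by (simp add: opM_Gof Gof_0)

lemma W_opM: assumes "F $ 0 = 1" shows "W * opM F = th (Gof F)"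
proof (rule fps_ext)
  fix d
  have a: "at_w0 (Gof F) = 1" using assms by (intro at_w0_Gof) simp
  have "Gof F $ d $ 0 = (if d = 0 then 1 else 0)"
    using arg_cong[OF a, of "\<lambda>x. x $ d"] by (simp add: fps_one_nth)
  then have "(of_nat d * Gof F $ d) $ 0 = 0" by simp
  then have "fps_X * fps_shift 1 (of_nat d * Gof F $ d) = of_nat d * Gof F $ d"
    by (rule X_shift1)
  then show "(W * opM F) $ d = th (Gof F) $ d"
    by (simp add: W_def opM_Gof fps_const_mult_left algebra_simps)
qed

lemma opM_1: "opM 1 = 1"
proof -
  have "Gof 1 = 1" by (simp add: Gof_def)
  moreover have "Abs_fps (\<lambda>d. fps_shift 1 ((of_nat d::rat fps) * (1::rat fps fps) $ d)) = 0"
    by (rule fps_ext) (simp add: fps_one_nth)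
  ultimately show ?thesis by (simp add: opM_Gof)
qed

lemma th_sum: "th (sum f S) = (\<Sum>i\<in>S. th (f i))"
  by (rule fps_ext) (simp add: fps_sum_nth sum_distrib_left)
lemma thD_sum: "thD s (sum f S) = (\<Sum>i\<in>S. thD s (f i))"
  by (rule fps_ext) (simp add: fps_sum_nth sum_distrib_left)

definition popW :: "(nat \<Rightarrow> rat fps) \<Rightarrow> nat \<Rightarrow> rat fps fps \<Rightarrow> rat fps fps" where
  "popW b m F = (\<Sum>i\<le>m. liftq (b i) * (th ^^ i) F)"
definition popD :: "(nat \<Rightarrow> rat fps) \<Rightarrow> nat \<Rightarrow> rat \<Rightarrow> rat fps \<Rightarrow> rat fps" where
  "popD b m s g = (\<Sum>i\<le>m. b i * (thD s ^^ i) g)"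
definition shiftop :: "(nat \<Rightarrow> rat fps) \<Rightarrow> nat \<Rightarrow> rat fps" where
  "shiftop b i = (case i of 0 \<Rightarrow> 0 | Suc j \<Rightarrow> b j) + Dq (b i)"

lemma Dq_0[simp]: "Dq 0 = 0" by (rule fps_ext) simp

lemma th_popW: assumes "b (Suc m) = 0" shows "th (popW b m F) = popW (shiftop b) (Suc m) F"
proof -
  have "th (popW b m F) = (\<Sum>i\<le>m. liftq (b i) * (th ^^ Suc i) F) + (\<Sum>i\<le>m. liftq (Dq (b i)) * (th ^^ i) F)"
    by (simp add: popW_def th_sum th_liftq_mult sum.distrib)
  also have "(\<Sum>i\<le>m. liftq (b i) * (th ^^ Suc i) F) = (\<Sum>i\<le>Suc m. liftq (case i of 0 \<Rightarrow> 0 | Suc j \<Rightarrow> b j) * (th ^^ i) F)"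
    by (subst sum.atMost_Suc_shift) simp
  also have "(\<Sum>i\<le>m. liftq (Dq (b i)) * (th ^^ i) F) = (\<Sum>i\<le>Suc m. liftq (Dq (b i)) * (th ^^ i) F)"
    using assms by simp
  finally show ?thesis
    by (simp add: popW_def shiftop_def liftq_add distrib_right sum.distrib)
qed

lemma thD_popD: assumes "b (Suc m) = 0" shows "thD s (popD b m s g) = popD (shiftop b) (Suc m) s g"
proof -
  have "thD s (popD b m s g) = (\<Sum>i\<le>m. b i * (thD s ^^ Suc i) g) + (\<Sum>i\<le>m. Dq (b i) * (thD s ^^ i) g)"
    by (simp add: popD_def thD_sum thD_mult sum.distrib)
  also have "(\<Sum>i\<le>m. b i * (thD s ^^ Suc i) g) = (\<Sum>i\<le>Suc m. (case i of 0 \<Rightarrow> 0 | Suc j \<Rightarrow> b j) * (thD s ^^ i) g)"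
    by (subst sum.atMost_Suc_shift) simp
  also have "(\<Sum>i\<le>m. Dq (b i) * (thD s ^^ i) g) = (\<Sum>i\<le>Suc m. Dq (b i) * (thD s ^^ i) g)"
    using assms by simp
  finally show ?thesis
    by (simp add: popD_def shiftop_def distrib_right sum.distrib)
qed

lemma mult_popW: "liftq c * popW b m F = popW (\<lambda>i. c * b i) m F"
  by (simp add: popW_def sum_distrib_left liftq_mult mult.assoc)
lemma mult_popD: "c * popD b m s g = popD (\<lambda>i. c * b i) m s g"
  by (simp add: popD_def sum_distrib_left mult.assoc)
lemma add_popW: "popW b m F + popW b' m F = popW (\<lambda>i. b i + b' i) m F"
  by (simp add: popW_def liftq_add distrib_right sum.distrib)
lemma add_popD: "popD b m s g + popD b' m s g = popD (\<lambda>i. b i + b' i) m s g"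
  by (simp add: popD_def distrib_right sum.distrib)
lemma diff_popW: "popW b m F - popW b' m F = popW (\<lambda>i. b i - b' i) m F"
  by (simp add: popW_def liftq_diff left_diff_distrib sum_subtractf)
lemma diff_popD: "popD b m s g - popD b' m s g = popD (\<lambda>i. b i - b' i) m s g"
  by (simp add: popD_def left_diff_distrib sum_subtractf)
lemma ext_popW: "b (Suc m) = 0 \<Longrightarrow> popW b (Suc m) F = popW b m F"
  by (simp add: popW_def)
lemma ext_popD: "b (Suc m) = 0 \<Longrightarrow> popD b (Suc m) s g = popD b m s g"
  by (simp add: popD_def)

fun chainW :: "(nat \<Rightarrow> rat fps) \<Rightarrow> nat \<Rightarrow> rat fps fps \<Rightarrow> rat fps fps" where
  "chainW u 0 F = liftq (inverse (u 0)) * F"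
| "chainW u (Suc m) F = liftq (inverse (u (Suc m))) * th (chainW u m F)"

fun chainD :: "rat \<Rightarrow> (nat \<Rightarrow> rat fps) \<Rightarrow> nat \<Rightarrow> rat fps \<Rightarrow> rat fps" where
  "chainD s u 0 g = inverse (u 0) * g"
| "chainD s u (Suc m) g = inverse (u (Suc m)) * thD s (chainD s u m g)"

lemma chain_pop: "\<exists>b. (\<forall>i>m. b i = 0) \<and> (\<forall>F. chainW u m F = popW b m F)
   \<and> (\<forall>s g. chainD s u m g = popD b m s g) \<and> b m = (\<Prod>p\<le>m. inverse (u p))"
proof (induction m)
  case 0
  show ?case
    by (rule exI[of _ "\<lambda>i. if i = 0 then inverse (u 0) else 0"]) (simp add: popW_def popD_def)
next
  case (Suc m)
  then obtain b where b: "\<forall>i>m. b i = 0" "\<forall>F. chainW u m F = popW b m F"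
     "\<forall>s g. chainD s u m g = popD b m s g" "b m = (\<Prod>p\<le>m. inverse (u p))" by blast
  define b' where "b' = (\<lambda>i. inverse (u (Suc m)) * shiftop b i)"
  have "\<forall>i>Suc m. b' i = 0"
    using b(1) by (auto simp: b'_def shiftop_def split: nat.split)
  moreover have "\<forall>F. chainW u (Suc m) F = popW b' (Suc m) F"
    using b(1,2) by (simp add: th_popW mult_popW b'_def)
  moreover have "\<forall>s g. chainD s u (Suc m) g = popD b' (Suc m) s g"
    using b(1,3) by (simp add: thD_popD mult_popD b'_def)
  moreover have "b' (Suc m) = (\<Prod>p\<le>Suc m. inverse (u p))"
    using b(1,4) by (simp add: b'_def shiftop_def mult.commute)
  ultimately show ?case by blast
qed

definition QW :: "rat list \<Rightarrow> rat fps fps \<Rightarrow> rat fps fps" where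
  "QW cs F = Abs_fps (\<lambda>d. (\<Prod>c\<leftarrow>cs. fps_X + fps_const (of_nat d + c)) * F $ d)"
definition QD :: "rat list \<Rightarrow> rat \<Rightarrow> rat fps \<Rightarrow> rat fps" where
  "QD cs s g = Abs_fps (\<lambda>d. (\<Prod>c\<leftarrow>cs. s + of_nat d + c) * g $ d)"

lemma QW_Cons: "QW (c # cs) F = th (QW cs F) + liftq (fps_const c) * QW cs F"
  by (rule fps_ext) (simp add: QW_def liftq_const fps_const_mult_left[symmetric] algebra_simps fps_of_nat flip: fps_const_add)

lemma QD_Cons: "QD (c # cs) s g = thD s (QD cs s g) + fps_const c * QD cs s g"
  by (rule fps_ext) (simp add: QD_def algebra_simps)

lemma Q_pop: "\<exists>e. (\<forall>i>length cs. e i = 0) \<and> (\<forall>F. QW cs F = popW e (length cs) F)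
   \<and> (\<forall>s g. QD cs s g = popD e (length cs) s g) \<and> e (length cs) = 1"
proof (induction cs)
  case Nil
  show ?case
    by (rule exI[of _ "\<lambda>i. if i = 0 then 1 else 0"])
       (auto simp: popW_def popD_def QW_def QD_def intro!: fps_ext)
next
  case (Cons c cs)
  then obtain e where e: "\<forall>i>length cs. e i = 0" "\<forall>F. QW cs F = popW e (length cs) F"
     "\<forall>s g. QD cs s g = popD e (length cs) s g" "e (length cs) = 1" by blast
  define e' where "e' = (\<lambda>i. shiftop e i + fps_const c * e i)"
  have "\<forall>i>length (c#cs). e' i = 0"
    using e(1) by (auto simp: e'_def shiftop_def split: nat.split)
  moreover have "\<forall>F. QW (c#cs) F = popW e' (length (c#cs)) F"
  proof
    fix F
    have "QW (c#cs) F = popW (shiftop e) (Suc (length cs)) F + popW (\<lambda>i. fps_const c * e i) (Suc (length cs)) F"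
      using e(1,2) by (simp add: QW_Cons th_popW mult_popW ext_popW)
    then show "QW (c#cs) F = popW e' (length (c#cs)) F" by (simp add: add_popW e'_def)
  qed
  moreover have "\<forall>s g. QD (c#cs) s g = popD e' (length (c#cs)) s g"
  proof (intro allI)
    fix s g
    have "QD (c#cs) s g = popD (shiftop e) (Suc (length cs)) s g + popD (\<lambda>i. fps_const c * e i) (Suc (length cs)) s g"
      using e(1,3) by (simp add: QD_Cons thD_popD mult_popD ext_popD)
    then show "QD (c#cs) s g = popD e' (length (c#cs)) s g" by (simp add: add_popD e'_def)
  qed
  moreover have "e' (length (c#cs)) = 1"
    using e(1,4) by (simp add: e'_def shiftop_def)
  ultimately show ?case by blast
qed

definition LW :: "rat list \<Rightarrow> rat \<Rightarrow> rat fps fps \<Rightarrow> rat fps fps" where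
  "LW cs A F = (th ^^ length cs) F - liftq (fps_const A * fps_X) * QW cs F"
definition LD :: "rat list \<Rightarrow> rat \<Rightarrow> rat \<Rightarrow> rat fps \<Rightarrow> rat fps" where
  "LD cs A s g = (thD s ^^ length cs) g - (fps_const A * fps_X) * QD cs s g"

lemma L_pop: "\<exists>b. (\<forall>i>length cs. b i = 0) \<and> (\<forall>F. LW cs A F = popW b (length cs) F)
   \<and> (\<forall>s g. LD cs A s g = popD b (length cs) s g) \<and> b (length cs) = 1 - fps_const A * fps_X"
proof -
  obtain e where e: "\<forall>i>length cs. e i = 0" "\<forall>F. QW cs F = popW e (length cs) F"
     "\<forall>s g. QD cs s g = popD e (length cs) s g" "e (length cs) = 1" using Q_pop by blast
  define k where "k = length cs"
  define ind where "ind = (\<lambda>i::nat. if i = k then (1::rat fps) else 0)"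
  have pw: "(th ^^ k) F = popW ind k F" for F
  proof -
    have "\<And>i. liftq (ind i) * (th ^^ i) F = (if i = k then (th ^^ i) F else 0)"
      by (simp add: ind_def)
    then show ?thesis by (simp add: popW_def)
  qed
  have pd: "(thD s ^^ k) g = popD ind k s g" for s g
  proof -
    have "\<And>i. ind i * (thD s ^^ i) g = (if i = k then (thD s ^^ i) g else 0)"
      by (simp add: ind_def)
    then show ?thesis by (simp add: popD_def)
  qed
  show ?thesis
    apply (rule exI[of _ "\<lambda>i. ind i - (fps_const A * fps_X) * e i"])
    using e unfolding k_def[symmetric]
    by (auto simp: LW_def LD_def k_def[symmetric] pw pd mult_popW mult_popD diff_popW diff_popD ind_def)
qed

lemma poly_inf:
  fixes c :: "nat \<Rightarrow> rat"
  assumes "infinite S" "\<And>s. s \<in> S \<Longrightarrow> (\<Sum>i\<le>m. c i * s^i) = 0"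
  shows "\<forall>i\<le>m. c i = 0"
proof (rule ccontr)
  assume "\<not> (\<forall>i\<le>m. c i = 0)"
  then obtain i where i: "i \<le> m" "c i \<noteq> 0" by blast
  then have ex: "\<exists>i\<le>m. (of_rat (c i) :: real) \<noteq> 0" by auto
  have fin: "finite {z::real. (\<Sum>i\<le>m. of_rat (c i) * z^i) = 0}"
    using polyfun_finite_roots[of "\<lambda>i. of_rat (c i)" m] ex by simp
  have sub: "of_rat ` S \<subseteq> {z::real. (\<Sum>i\<le>m. of_rat (c i) * z^i) = 0}"
  proof
    fix z assume "z \<in> (of_rat ` S :: real set)"
    then obtain s where s: "s \<in> S" "z = of_rat s" by blast
    have "(\<Sum>i\<le>m. of_rat (c i) * z^i) = (of_rat (\<Sum>i\<le>m. c i * s^i) :: real)"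
      unfolding s(2) of_rat_sum of_rat_mult of_rat_power by (rule refl)
    then show "z \<in> {z::real. (\<Sum>i\<le>m. of_rat (c i) * z^i) = 0}" using assms(2)[OF s(1)] by simp
  qed
  have "finite (of_rat ` S :: real set)" using fin sub by (rule finite_subset[rotated])
  moreover have "inj_on (of_rat :: rat \<Rightarrow> real) S" by (simp add: inj_on_def)
  ultimately have "finite S" by (simp add: finite_image_iff)
  then show False using assms(1) by simp
qed

lemma th_pow_1_nth: "(th ^^ i) 1 $ e = (if e = 0 then fps_X ^ i else 0)"
  by (simp add: th_pow_nth fps_one_nth)

lemma liftq_mult_delta: assumes "\<And>e. e > 0 \<Longrightarrow> Z $ e = 0"
  shows "(liftq c * Z) $ d = fps_const (c $ d) * Z $ 0"
proof -
  have "(liftq c * Z) $ d = (Z * liftq c) $ d" by (simp add: mult.commute)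
  also have "\<dots> = (\<Sum>i=0..d. Z $ i * fps_const (c $ (d - i)))" by (simp add: fps_mult_nth)
  also have "\<dots> = Z $ 0 * fps_const (c $ d)"
    by (subst sum.remove[of _ 0]) (auto simp: assms intro!: sum.neutral)
  finally show ?thesis by (simp add: mult.commute)
qed

lemma sum_delta_mult: "(\<Sum>k\<le>(m::nat). f k * (if j = k then 1 else 0)) = (if j \<le> m then f j else (0::'a::comm_ring_1))"
proof -
  have "\<And>k. f k * (if j = k then 1 else 0) = (if j = k then f j else 0)" by simp
  then show ?thesis by (simp add: sum.delta')
qed

lemma popW_1_nth: "(popW b m 1 $ d) $ j = (if j \<le> m then b j $ d else 0)"
proof -
  have "popW b m 1 $ d = (\<Sum>i\<le>m. fps_const (b i $ d) * fps_X ^ i)"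
    by (simp add: popW_def fps_sum_nth liftq_mult_delta th_pow_1_nth)
  then show ?thesis by (simp add: fps_sum_nth fps_X_power_nth sum_delta_mult)
qed

lemma popD_1: "popD b m s 1 = (\<Sum>i\<le>m. b i * fps_const (s ^ i))"
  by (simp add: popD_def thD_pow_1)

lemma popD_1_nth: "popD b m s 1 $ d = (\<Sum>i\<le>m. b i $ d * s ^ i)"
  by (simp add: popD_1 fps_sum_nth)

lemma sum_last: "(\<And>e. e < (d::nat) \<Longrightarrow> g e = 0) \<Longrightarrow> (\<Sum>e=0..d. g e) = g d"
proof -
  assume h: "\<And>e. e < d \<Longrightarrow> g e = 0"
  have "(\<Sum>e=0..d. g e) = g d + (\<Sum>e\<in>{0..d}-{d}. g e)" using sum.remove[of "{0..d}" d g] by simp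
  also have "(\<Sum>e\<in>{0..d}-{d}. g e) = 0" using h by (intro sum.neutral) auto
  finally show ?thesis by simp
qed

lemma uniq_pop:
  assumes F0: "F $ 0 = 1"
    and z: "\<And>d j. j < k \<Longrightarrow> (popW b m F $ d) $ j = 0"
    and hi: "\<And>i. k \<le> i \<Longrightarrow> b i = 0" and km: "k \<le> Suc m"
  shows "b i = 0"
proof -
  have "\<forall>i. b i $ d = 0" for d
  proof (induction d rule: less_induct)
    case (less d)
    have inner: "(liftq (b i) * (th ^^ i) F) $ d = fps_const (b i $ d) * fps_X ^ i" for i
    proof -
      have "(liftq (b i) * (th ^^ i) F) $ d = (\<Sum>e=0..d. fps_const (b i $ e) * (th ^^ i) F $ (d - e))"
        by (simp add: liftq_mult_nth)
      also have "\<dots> = fps_const (b i $ d) * (th ^^ i) F $ 0"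
        using less by (subst sum_last) auto
      finally show ?thesis by (simp add: th_pow_nth F0)
    qed
    have "popW b m F $ d = (\<Sum>i\<le>m. fps_const (b i $ d) * fps_X ^ i)"
      by (simp add: popW_def fps_sum_nth inner)
    then have c: "(popW b m F $ d) $ j = (if j \<le> m then b j $ d else 0)" for j
      by (simp add: fps_sum_nth fps_X_power_nth sum_delta_mult)
    show ?case
    proof
      fix j show "b j $ d = 0"
      proof (cases "j < k")
        case True then show ?thesis using z[OF True, of d] c[of j] km by simp
      next
        case False then show ?thesis using hi by simp
      qed
    qed
  qed
  then show ?thesis by (simp add: fps_ext)
qed

lemma chain_right: "chainD t v (Suc m) g = chainD t (\<lambda>p. v (Suc p)) m (thD t (inverse (v 0) * g))"
  by (induction m arbitrary: g) auto

lemma chainD_const: "chainD s u m (fps_const c * g) = fps_const c * chainD s u m g"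
  by (induction m) (simp_all add: thD_const mult.left_commute)

lemma chainD_0[simp]: "chainD s u m 0 = 0"
  by (induction m) simp_all

lemma chainD_neg: "chainD s u m (- g) = - chainD s u m g"
  using chainD_const[of s u m "-1" g] by (simp flip: fps_const_neg)

definition Pn :: "nat \<Rightarrow> rat fps \<Rightarrow> rat fps \<Rightarrow> rat" where
  "Pn N f g = (f * g) $ N"

lemma Pn_mult: "Pn N (c * f) g = Pn N f (c * g)"
  by (simp add: Pn_def mult_ac)

lemma Pn_neg: "Pn N f (- g) = - Pn N f g"
  by (simp add: Pn_def)

lemma Pn_thD: "Pn N (thD s f) g = - Pn N f (thD (- s - of_nat N) g)"
proof -
  have "Pn N (thD s f) g = (\<Sum>i=0..N. (s + of_nat i) * f $ i * g $ (N - i))"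
    by (simp add: Pn_def fps_mult_nth)
  also have "\<dots> = - (\<Sum>i=0..N. f $ i * ((- s - of_nat N + of_nat (N - i)) * g $ (N - i)))"
    unfolding sum_negf[symmetric]
  proof (rule sum.cong)
    fix i assume "i \<in> {0..N}"
    then have "(of_nat (N - i) :: rat) = of_nat N - of_nat i" by (simp add: of_nat_diff)
    then show "(s + of_nat i) * f $ i * g $ (N - i) = - (f $ i * ((- s - of_nat N + of_nat (N - i)) * g $ (N - i)))"
      by (simp add: algebra_simps)
  qed simp
  also have "\<dots> = - Pn N f (thD (- s - of_nat N) g)"
    by (simp add: Pn_def fps_mult_nth)
  finally show ?thesis .
qed

lemma Pn_chain: "Pn N (chainD s u m f) g = (-1)^m * Pn N f (chainD (- s - of_nat N) (\<lambda>p. u (m - p)) m g)"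
proof (induction m arbitrary: g)
  case 0
  then show ?case by (simp add: Pn_mult)
next
  case (Suc m)
  let ?t = "- s - of_nat N"
  have "Pn N (chainD s u (Suc m) f) g = Pn N (thD s (chainD s u m f)) (inverse (u (Suc m)) * g)"
    by (simp add: Pn_mult)
  also have "\<dots> = - Pn N (chainD s u m f) (thD ?t (inverse (u (Suc m)) * g))"
    by (rule Pn_thD)
  also have "\<dots> = - ((-1)^m * Pn N f (chainD ?t (\<lambda>p. u (m - p)) m (thD ?t (inverse (u (Suc m)) * g))))"
    by (simp add: Suc.IH)
  also have "chainD ?t (\<lambda>p. u (m - p)) m (thD ?t (inverse (u (Suc m)) * g))
       = chainD ?t (\<lambda>p. u (Suc m - p)) (Suc m) g"
    by (subst chain_right) simp
  finally show ?case by simp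
qed

lemma kernel0:
  assumes "\<forall>p\<le>m. u p $ 0 \<noteq> 0" "chainD 0 u m h = 0" "h $ 0 = 0"
  shows "h = 0"
  using assms
proof (induction m arbitrary: u h)
  case 0
  then show ?case by simp
next
  case (Suc m)
  define y where "y = inverse (u 0) * h"
  have "chainD 0 (\<lambda>p. u (Suc p)) m (thD 0 y) = 0"
    using Suc.prems(2) by (simp only: chain_right y_def)
  moreover have "thD 0 y $ 0 = 0" by simp
  moreover have "\<forall>p\<le>m. u (Suc p) $ 0 \<noteq> 0" using Suc.prems(1) by auto
  ultimately have "thD 0 y = 0" using Suc.IH[of "\<lambda>p. u (Suc p)" "thD 0 y"] by blast
  then have "\<And>d. d > 0 \<Longrightarrow> y $ d = 0"
    by (metis add_0 fps_zero_nth mult_eq_0_iff of_nat_eq_0_iff not_gr0 thD_nth)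
  moreover have "y $ 0 = 0" using Suc.prems(3) by (simp add: y_def)
  ultimately have "y = 0" by (metis fps_ext fps_zero_nth not_gr0)
  moreover have "inverse (u 0) \<noteq> 0" using Suc.prems(1) by simp
  ultimately show ?case by (simp add: y_def)
qed

lemma thD_1: "thD s 1 = fps_const s"
  by (rule fps_ext) (simp add: fps_one_nth)

lemma fps_eq_1_from_thD0: assumes "thD 0 y = 0" "y $ 0 = 1" shows "y = 1"
proof (rule fps_ext)
  fix d
  show "y $ d = 1 $ d"
  proof (cases "d = 0")
    case True then show ?thesis using assms(2) by simp
  next
    case False
    then have "(0 + of_nat d) * y $ d = 0" using arg_cong[OF assms(1), of "\<lambda>x. x $ d"] by simp
    then show ?thesis using False by (simp add: fps_one_nth)
  qed
qed

lemma peel: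
  assumes "\<forall>p\<le>m. u p $ 0 = 1" "\<forall>p\<le>m. v p $ 0 = 1" "\<forall>s g. chainD s u m g = chainD s v m g"
  shows "\<forall>p\<le>m. u p = v p"
  using assms
proof (induction m arbitrary: u v)
  case 0
  have "chainD 0 u 0 1 = chainD 0 v 0 1" by (rule 0(3)[rule_format])
  then have "inverse (u 0) = inverse (v 0)" by simp
  then have "inverse (inverse (u 0)) = inverse (inverse (v 0))" by simp
  then show ?case using 0(1,2) by simp
next
  case (Suc m)
  have iu: "inverse (u 0) * u 0 = 1" using Suc.prems(1) by (intro inverse_mult_eq_1) simp
  have thD01: "thD 0 1 = 0" by (simp add: thD_1)
  have c0: "chainD 0 u (Suc m) (u 0) = 0"
    by (simp only: chain_right iu thD01 chainD_0)
  have e: "chainD 0 u (Suc m) (u 0) = chainD 0 v (Suc m) (u 0)" by (rule Suc.prems(3)[rule_format])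
  have "chainD 0 v (Suc m) (u 0) = 0" using c0 unfolding e .
  then have "chainD 0 (\<lambda>p. v (Suc p)) m (thD 0 (inverse (v 0) * u 0)) = 0"
    by (simp only: chain_right)
  moreover have "\<forall>p\<le>m. v (Suc p) $ 0 \<noteq> 0" using Suc.prems(2) by auto
  moreover have "thD 0 (inverse (v 0) * u 0) $ 0 = 0" by simp
  ultimately have "thD 0 (inverse (v 0) * u 0) = 0" using kernel0[of m "\<lambda>p. v (Suc p)" "thD 0 (inverse (v 0) * u 0)"] by blast
  moreover have "(inverse (v 0) * u 0) $ 0 = 1" using Suc.prems(1,2) by simp
  ultimately have y1: "inverse (v 0) * u 0 = 1" by (rule fps_eq_1_from_thD0)
  have vi: "v 0 * inverse (v 0) = 1" using Suc.prems(2) by (intro inverse_mult_eq_1') simp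
  have u0: "u 0 = v 0"
  proof -
    have "u 0 = v 0 * (inverse (v 0) * u 0)" by (simp add: mult.assoc[symmetric] vi)
    then show ?thesis by (simp add: y1)
  qed
  define u' where "u' = (\<lambda>p. u (Suc p))"
  define v' where "v' = (\<lambda>p. v (Suc p))"
  have eq1: "chainD s u' m 1 = chainD s v' m 1" if "s \<noteq> 0" for s
  proof -
    have "chainD s u (Suc m) (u 0) = chainD s v (Suc m) (u 0)" by (rule Suc.prems(3)[rule_format])
    then have "chainD s u' m (thD s (inverse (u 0) * u 0)) = chainD s v' m (thD s (inverse (v 0) * u 0))"
      by (simp only: chain_right u'_def v'_def)
    then have "chainD s u' m (fps_const s * 1) = chainD s v' m (fps_const s * 1)"
      by (simp add: iu y1 thD_1)
    then have "fps_const s * chainD s u' m 1 = fps_const s * chainD s v' m 1"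
      by (simp only: chainD_const)
    then show ?thesis using that by simp
  qed
  obtain b where b: "\<forall>s g. chainD s u' m g = popD b m s g" using chain_pop by blast
  obtain b' where b': "\<forall>s g. chainD s v' m g = popD b' m s g" using chain_pop by blast
  have bb: "b i = b' i" if "i \<le> m" for i
  proof (rule fps_ext)
    fix d
    have "\<forall>i\<le>m. b i $ d - b' i $ d = 0"
    proof (rule poly_inf[of "{s. s \<noteq> 0}"])
      show "infinite {s::rat. s \<noteq> 0}"
        using infinite_UNIV_char_0[where 'a=rat] by (simp add: Collect_neg_eq finite_Diff2)
    next
      fix s :: rat assume "s \<in> {s. s \<noteq> 0}"
      then have "popD b m s 1 $ d = popD b' m s 1 $ d" using eq1[of s] b b' by simp
      then show "(\<Sum>i\<le>m. (b i $ d - b' i $ d) * s ^ i) = 0"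
        by (simp add: popD_1_nth left_diff_distrib sum_subtractf)
    qed
    then show "b i $ d = b' i $ d" using that by simp
  qed
  have "\<forall>s g. chainD s u' m g = chainD s v' m g"
  proof (intro allI)
    fix s g
    have "popD b m s g = popD b' m s g" unfolding popD_def by (rule sum.cong) (simp_all add: bb)
    then show "chainD s u' m g = chainD s v' m g" using b b' by simp
  qed
  moreover have "\<forall>p\<le>m. u' p $ 0 = 1" "\<forall>p\<le>m. v' p $ 0 = 1"
    using Suc.prems(1,2) by (auto simp: u'_def v'_def)
  ultimately have "\<forall>p\<le>m. u' p = v' p" using Suc.IH[of u' v'] by blast
  then have IHr: "\<forall>p\<le>m. u (Suc p) = v (Suc p)" by (simp add: u'_def v'_def)
  show ?case
  proof (intro allI impI)
    fix p assume "p \<le> Suc m"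
    then show "u p = v p" using u0 IHr by (cases p) auto
  qed
qed


lemma plc: "prod_list (map f (concat xss)) = prod_list (map (\<lambda>xs. prod_list (map f xs)) xss)"
  by (induction xss) simp_all

lemma plu: "prod_list (map f [m..<n]) = prod f {m..<n}"
  using prod.distinct_set_conv_list[of "[m..<n]" f] by simp

definition csl :: "nat \<Rightarrow> (nat \<Rightarrow> nat) \<Rightarrow> rat list" where
  "csl l a = concat (map (\<lambda>j. map (\<lambda>r. of_nat r / of_nat (a j)) [1..<a j]) [1..<Suc l])"

lemma csl_prod: "(\<Prod>c\<leftarrow>csl l a. f c) = (\<Prod>j=1..l. \<Prod>r\<in>{1..<a j}. f (of_nat r / of_nat (a j)))"
  unfolding csl_def plc map_map by (simp only: o_def plu map_map atLeastLessThanSuc_atLeastAtMost)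

lemma csl_length: "length (csl l a) = (\<Sum>j=1..l. a j - 1)"
  unfolding csl_def length_concat map_map
  by (simp only: o_def length_map length_upt interv_sum_list_conv_sum_set_nat set_upt atLeastLessThanSuc_atLeastAtMost)

lemma block:
  fixes a d :: nat assumes "a \<ge> 1"
  shows "(\<Prod>r=1..a * Suc d. fps_const (of_nat a) * fps_X + fps_const (of_nat r :: rat))
    = (\<Prod>r=1..a * d. fps_const (of_nat a) * fps_X + fps_const (of_nat r))
      * (fps_const (of_nat a ^ a) * ((fps_X + fps_const (of_nat (Suc d)))
         * (\<Prod>r\<in>{1..<a}. fps_X + fps_const (of_nat d + of_nat r / of_nat a))))"
proof -
  define g where "g = (\<lambda>r::nat. fps_const (of_nat a) * fps_X + fps_const (of_nat r :: rat))"
  define h where "h = (\<lambda>r::nat. fps_X + fps_const (of_nat d + of_nat r / of_nat a :: rat))"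
  have e: "a * Suc d = a * d + a" by simp
  have "prod g {1..a * Suc d} = prod g {1..a * d} * prod g {a * d + 1..a * d + a}"
    unfolding e by (rule prod.ub_add_nat) simp
  also have "prod g {a * d + 1..a * d + a} = prod (\<lambda>i. g (i + a * d)) {1..a}"
    using prod.shift_bounds_cl_nat_ivl[of g 1 "a*d" a] by (simp add: add.commute)
  also have "\<dots> = prod (\<lambda>i. fps_const (of_nat a) * h i) {1..a}"
  proof (rule prod.cong)
    fix i assume "i \<in> {1..a}"
    have "(of_nat (i + a * d) :: rat) = of_nat a * (of_nat d + of_nat i / of_nat a)"
      using assms by (simp add: field_simps)
    then show "g (i + a * d) = fps_const (of_nat a) * h i"
      by (simp add: g_def h_def algebra_simps)
  qed simp
  also have "\<dots> = fps_const (of_nat a) ^ a * prod h {1..a}"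
    by (simp add: prod.distrib)
  also have "prod h {1..a} = h a * prod h {1..<a}"
  proof -
    have "{1..a} = insert a {1..<a}" using assms by auto
    then show ?thesis by simp
  qed
  also have "h a = fps_X + fps_const (of_nat (Suc d))"
    using assms by (simp add: h_def add.commute)
  finally show ?thesis by (simp add: g_def h_def mult_ac)
qed

lemma fps_const_prod: "fps_const (prod f S) = (\<Prod>i\<in>S. fps_const (f i))"
  by (induction S rule: infinite_finite_induct) (simp_all flip: fps_const_mult)

definition Num :: "nat \<Rightarrow> (nat \<Rightarrow> nat) \<Rightarrow> nat \<Rightarrow> rat fps" where
  "Num l a d = (\<Prod>k=1..l. \<Prod>r=1..a k * d. fps_const (of_nat (a k)) * fps_X + fps_const (of_nat r))"
definition Den :: "nat \<Rightarrow> nat \<Rightarrow> rat fps" where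
  "Den n d = (\<Prod>r=1..d. (fps_X + fps_const (of_nat r)) ^ n)"

lemma tildeF_nth: "tildeF l a n $ d = Num l a d * inverse (Den n d)"
  by (simp add: tildeF_def Num_def Den_def)

lemma tildeF_0: "tildeF l a n $ 0 = 1"
  by (simp add: tildeF_nth Num_def Den_def)

lemma Num_Suc:
  assumes "\<And>j. j \<in> {1..l} \<Longrightarrow> a j \<ge> 1"
  shows "Num l a (Suc d) = Num l a d * (fps_const (of_nat (aa l a)) * ((fps_X + fps_const (of_nat (Suc d)))^l
           * (\<Prod>c\<leftarrow>csl l a. fps_X + fps_const (of_nat d + c))))"
proof -
  have "Num l a (Suc d) = (\<Prod>k=1..l. (\<Prod>r=1..a k * d. fps_const (of_nat (a k)) * fps_X + fps_const (of_nat r))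
      * (fps_const (of_nat (a k) ^ a k) * ((fps_X + fps_const (of_nat (Suc d)))
         * (\<Prod>r\<in>{1..<a k}. fps_X + fps_const (of_nat d + of_nat r / of_nat (a k))))))"
    unfolding Num_def
  proof (rule prod.cong)
    fix k assume "k \<in> {1..l}"
    then have "1 \<le> a k" using assms by auto
    then show "(\<Prod>r=1..a k * Suc d. fps_const (of_nat (a k)) * fps_X + fps_const (of_nat r :: rat)) =
      (\<Prod>r=1..a k * d. fps_const (of_nat (a k)) * fps_X + fps_const (of_nat r))
      * (fps_const (of_nat (a k) ^ a k) * ((fps_X + fps_const (of_nat (Suc d)))
         * (\<Prod>r\<in>{1..<a k}. fps_X + fps_const (of_nat d + of_nat r / of_nat (a k)))))"
      by (rule block)
  qed simp
  also have "\<dots> = Num l a d * ((\<Prod>k=1..l. fps_const (of_nat (a k) ^ a k)) * ((\<Prod>k=1..l. fps_X + fps_const (of_nat (Suc d)))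
         * (\<Prod>k=1..l. \<Prod>r\<in>{1..<a k}. fps_X + fps_const (of_nat d + of_nat r / of_nat (a k)))))"
    by (simp only: prod.distrib Num_def)
  also have "(\<Prod>k=1..l. fps_const (of_nat (a k) ^ a k)) = fps_const (of_nat (aa l a))"
    by (simp add: aa_def fps_const_prod)
  also have "(\<Prod>k=1..l. fps_X + fps_const (of_nat (Suc d))) = (fps_X + fps_const (of_nat (Suc d)))^l"
    by simp
  also have "(\<Prod>k=1..l. \<Prod>r\<in>{1..<a k}. fps_X + fps_const (of_nat d + of_nat r / of_nat (a k)))
      = (\<Prod>c\<leftarrow>csl l a. fps_X + fps_const (of_nat d + c))"
    by (simp add: csl_prod)
  finally show ?thesis .
qed

lemma Den_Suc: "Den n (Suc d) = Den n d * (fps_X + fps_const (of_nat (Suc d)))^n"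
  unfolding Den_def by (subst prod.nat_ivl_Suc') (simp_all add: mult.commute)

lemma recur:
  assumes "\<And>j. j \<in> {1..l} \<Longrightarrow> a j \<ge> 1" and kl: "k + l = n"
  shows "(fps_X + of_nat (Suc d))^k * tildeF l a n $ Suc d
     = fps_const (of_nat (aa l a)) * (\<Prod>c\<leftarrow>csl l a. fps_X + fps_const (of_nat d + c)) * tildeF l a n $ d"
proof -
  define Y :: "rat fps" where "Y = fps_X + fps_const (of_nat (Suc d))"
  define C :: "rat fps" where "C = fps_const (of_nat (aa l a))"
  define Q where "Q = (\<Prod>c\<leftarrow>csl l a. fps_X + fps_const (of_nat d + c))"
  have Y0: "(Y ^ n) $ 0 \<noteq> 0" by (simp add: Y_def fps_nth_power_0)
  have YY: "Y ^ n * inverse (Y ^ n) = 1" using Y0 by (rule inverse_mult_eq_1')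
  have n1: "tildeF l a n $ Suc d = Num l a d * (C * (Y^l * Q)) * (inverse (Den n d) * inverse (Y^n))"
  proof -
    have NS: "Num l a (Suc d) = Num l a d * (C * (Y^l * Q))"
      unfolding C_def Y_def Q_def by (rule Num_Suc) (rule assms)
    have DS: "Den n (Suc d) = Den n d * Y^n" unfolding Y_def by (rule Den_Suc)
    show ?thesis by (simp only: tildeF_nth NS DS fps_inverse_mult)
  qed
  have y: "(fps_X + of_nat (Suc d) :: rat fps) = Y" unfolding Y_def fps_of_nat ..
  have "(fps_X + of_nat (Suc d))^k * tildeF l a n $ Suc d
      = Y^k * (Num l a d * (C * (Y^l * Q)) * (inverse (Den n d) * inverse (Y^n)))"
    unfolding n1 y ..
  also have "\<dots> = C * Q * (Num l a d * inverse (Den n d)) * (Y ^ n * inverse (Y ^ n))"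
    by (simp add: kl[symmetric] power_add mult_ac)
  also have "\<dots> = C * Q * tildeF l a n $ d" by (simp add: YY tildeF_nth)
  finally show ?thesis by (simp add: C_def Q_def)
qed

lemma liftq_AX: "liftq (fps_const A * fps_X) = fps_const (fps_const A) * fps_X"
  by (rule fps_ext) simp

lemma LW_tildeF:
  assumes "\<And>j. j \<in> {1..l} \<Longrightarrow> a j \<ge> 1" and kl: "length (csl l a) + l = n"
  shows "LW (csl l a) (of_nat (aa l a)) (tildeF l a n) = W ^ length (csl l a)"
proof (rule fps_ext)
  fix d
  let ?k = "length (csl l a)"
  show "LW (csl l a) (of_nat (aa l a)) (tildeF l a n) $ d = W ^ ?k $ d"
  proof (cases d)
    case 0
    then show ?thesis
      by (simp add: LW_def th_pow_nth liftq_AX mult.assoc tildeF_0 W_def)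
  next
    case (Suc d')
    have "LW (csl l a) (of_nat (aa l a)) (tildeF l a n) $ d
        = (fps_X + of_nat (Suc d'))^?k * tildeF l a n $ Suc d'
          - fps_const (of_nat (aa l a)) * ((\<Prod>c\<leftarrow>csl l a. fps_X + fps_const (of_nat d' + c)) * tildeF l a n $ d')"
      by (simp add: Suc LW_def th_pow_nth liftq_AX mult.assoc QW_def)
    also have "\<dots> = 0" using recur[OF assms(1) kl, where d=d'] by (simp add: mult.assoc)
    finally show ?thesis by (simp add: Suc W_def)
  qed
qed


lemma prod_list_neg: "(\<Prod>c\<leftarrow>cs. - f c) = (-1::'a::comm_ring_1) ^ length cs * (\<Prod>c\<leftarrow>cs. f c)"
  by (induction cs) simp_all

lemma csl_refl:
  assumes "\<And>j. j \<in> {1..l} \<Longrightarrow> a j \<ge> 1"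
  shows "(\<Prod>c\<leftarrow>csl l a. x + c) = (\<Prod>c\<leftarrow>csl l a. x + 1 - c)"
proof -
  have "(\<Prod>r\<in>{1..<a j}. x + of_nat r / of_nat (a j)) = (\<Prod>r\<in>{1..<a j}. x + 1 - of_nat r / of_nat (a j))"
    if j: "j \<in> {1..l}" for j
  proof -
    have aj: "a j \<ge> 1" using assms j by auto
    have pt: "x + 1 - of_nat (a j - r) / of_nat (a j) = x + of_nat r / of_nat (a j)"
      if r: "r \<in> {1..<a j}" for r
    proof -
      have "(of_nat (a j - r) :: rat) = of_nat (a j) - of_nat r" using r by (simp add: of_nat_diff)
      moreover have "(of_nat (a j)::rat) \<noteq> 0" using aj by simp
      ultimately show ?thesis by (simp add: field_simps)
    qed
    show ?thesis
    proof (rule prod.reindex_bij_witness[where i="\<lambda>r. a j - r" and j="\<lambda>r. a j - r"])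
      fix r assume "r \<in> {1..<a j}"
      then show "x + 1 - of_nat (a j - r) / of_nat (a j) = x + of_nat r / of_nat (a j)" by (rule pt)
    qed auto
  qed
  then show ?thesis by (simp add: csl_prod)
qed

lemma Pn_diff1: "Pn N (x - y) g = Pn N x g - Pn N y g"
  by (simp add: Pn_def algebra_simps)
lemma Pn_diff2: "Pn N f (x - y) = Pn N f x - Pn N f y"
  by (simp add: Pn_def algebra_simps)

lemma Pn_thD_pow: "Pn N ((thD s ^^ k) f) g = (-1)^k * Pn N f ((thD (- s - of_nat N) ^^ k) g)"
proof (induction k arbitrary: g)
  case 0 then show ?case by simp
next
  case (Suc k)
  have "Pn N ((thD s ^^ Suc k) f) g = - Pn N ((thD s ^^ k) f) (thD (- s - of_nat N) g)"
    by (simp add: Pn_thD)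
  also have "\<dots> = - ((-1)^k * Pn N f ((thD (- s - of_nat N) ^^ k) (thD (- s - of_nat N) g)))"
    by (simp add: Suc.IH)
  also have "(thD (- s - of_nat N) ^^ k) (thD (- s - of_nat N) g) = (thD (- s - of_nat N) ^^ Suc k) g"
    by (simp add: funpow_Suc_right del: funpow.simps)
  finally show ?case by simp
qed

lemma AX_nth: "((fps_const (A::rat) * fps_X) * h) $ m = (if m = 0 then 0 else A * h $ (m - 1))"
  unfolding mult.assoc fps_mult_left_const_nth fps_X_mult_nth by simp

lemma Pn_Q:
  assumes refl: "\<And>x. (\<Prod>c\<leftarrow>cs. x + c) = (\<Prod>c\<leftarrow>cs. x + 1 - c)"
  shows "Pn N ((fps_const A * fps_X) * QD cs s f) g
       = (-1)^length cs * Pn N f ((fps_const A * fps_X) * QD cs (- s - of_nat N) g)"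
proof -
  have "Pn N ((fps_const A * fps_X) * QD cs s f) g = Pn N (QD cs s f) ((fps_const A * fps_X) * g)"
    by (simp add: Pn_def mult_ac)
  also have "\<dots> = (\<Sum>i=0..N. (\<Prod>c\<leftarrow>cs. s + of_nat i + c) * f $ i * (if N - i = 0 then 0 else A * g $ (N - i - 1)))"
    unfolding Pn_def by (subst fps_mult_nth) (simp add: AX_nth QD_def cong: if_cong)
  also have "\<dots> = (-1)^length cs * (\<Sum>i=0..N. f $ i * (if N - i = 0 then 0 else A * ((\<Prod>c\<leftarrow>cs. (- s - of_nat N) + of_nat (N - i - 1) + c) * g $ (N - i - 1))))"
    unfolding sum_distrib_left
  proof (rule sum.cong)
    fix i assume i: "i \<in> {0..N}"
    show "(\<Prod>c\<leftarrow>cs. s + of_nat i + c) * f $ i * (if N - i = 0 then 0 else A * g $ (N - i - 1)) =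
      (-1)^length cs * (f $ i * (if N - i = 0 then 0 else A * ((\<Prod>c\<leftarrow>cs. (- s - of_nat N) + of_nat (N - i - 1) + c) * g $ (N - i - 1))))"
    proof (cases "N - i = 0")
      case True then show ?thesis by simp
    next
      case False
      then have "(of_nat (N - i - 1) :: rat) = of_nat N - of_nat i - 1" using i by (simp add: of_nat_diff)
      then have "(\<Prod>c\<leftarrow>cs. (- s - of_nat N) + of_nat (N - i - 1) + c) = (\<Prod>c\<leftarrow>cs. - ((s + of_nat i) + 1 - c))"
        by (simp add: algebra_simps)
      also have "\<dots> = (-1)^length cs * (\<Prod>c\<leftarrow>cs. (s + of_nat i) + 1 - c)"
        by (rule prod_list_neg)
      also have "(\<Prod>c\<leftarrow>cs. (s + of_nat i) + 1 - c) = (\<Prod>c\<leftarrow>cs. s + of_nat i + c)"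
        by (rule refl[symmetric])
      finally have e: "(\<Prod>c\<leftarrow>cs. (- s - of_nat N) + of_nat (N - i - 1) + c) = (-1)^length cs * (\<Prod>c\<leftarrow>cs. s + of_nat i + c)" .
      have m1: "(-1::rat)^length cs * (-1)^length cs = 1"
        by (simp flip: power_mult_distrib)
      define Qs where "Qs = (\<Prod>c\<leftarrow>cs. s + of_nat i + c)"
      have "(-1)^length cs * (f $ i * (A * ((-1)^length cs * Qs * g $ (N - i - 1))))
         = ((-1)^length cs * (-1)^length cs) * (Qs * f $ i * (A * g $ (N - i - 1)))"
        by (simp only: mult_ac)
      also have "\<dots> = Qs * f $ i * (A * g $ (N - i - 1))" unfolding m1 by simp
      finally show ?thesis unfolding if_not_P[OF False] e Qs_def by simp
    qed
  qed simp
  also have "(\<Sum>i=0..N. f $ i * (if N - i = 0 then 0 else A * ((\<Prod>c\<leftarrow>cs. (- s - of_nat N) + of_nat (N - i - 1) + c) * g $ (N - i - 1))))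
     = Pn N f ((fps_const A * fps_X) * QD cs (- s - of_nat N) g)"
    unfolding Pn_def by (subst fps_mult_nth) (simp add: AX_nth QD_def cong: if_cong)
  finally show ?thesis .
qed

lemma Pn_L:
  assumes refl: "\<And>x. (\<Prod>c\<leftarrow>cs. x + c) = (\<Prod>c\<leftarrow>cs. x + 1 - c)"
  shows "Pn N (LD cs A s f) g = (-1)^length cs * Pn N f (LD cs A (- s - of_nat N) g)"
  unfolding LD_def Pn_diff1 Pn_diff2 Pn_thD_pow Pn_Q[OF refl] by (simp add: algebra_simps)


lemma W_pow_nth: "(W^k * Z) $ d = fps_X^k * Z $ d"
proof -
  have "W^k = fps_const (fps_X^k)" by (simp add: W_def)
  then show ?thesis by simp
qed

lemma W_pow_low: "j < k \<Longrightarrow> ((W^k * Z) $ d) $ j = 0"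
  by (simp add: W_pow_nth fps_X_power_mult_nth)

lemma W_nz: "W ^ k \<noteq> 0"
  by (simp add: W_def)

lemma opM_eq_1: assumes "Gof F = 1" shows "opM F = 1"
proof -
  have "Abs_fps (\<lambda>d. fps_shift 1 ((of_nat d::rat fps) * (1::rat fps fps) $ d)) = 0"
    by (rule fps_ext) (simp add: fps_one_nth)
  then show ?thesis using assms by (simp add: opM_Gof)
qed

lemma Pn_Xpow: "j \<le> N \<Longrightarrow> Pn N (fps_X ^ j) h = h $ (N - j)"
  by (simp add: Pn_def fps_X_power_mult_nth)

lemma prod_nth0: "(prod f S :: rat fps) $ 0 = (\<Prod>i\<in>S. f i $ 0)"
  by (induction S rule: infinite_finite_induct) (simp_all add: fps_mult_nth_0)

lemma inverse_prod: "finite S \<Longrightarrow> inverse (prod f S :: rat fps) = (\<Prod>i\<in>S. inverse (f i))"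
  by (induction S rule: finite_induct) (simp_all add: fps_inverse_mult)

lemma at_w0_0[simp]: "at_w0 0 = 0"
  by (rule fps_ext) simp

lemma liftq_eq_0: "liftq c = 0 \<Longrightarrow> c = 0"
  using at_w0_liftq[of c] by simp

lemma sqrt_unique:
  fixes x y :: "rat fps"
  assumes "x^2 = y^2" "x $ 0 = 1" "y $ 0 = 1"
  shows "x = y"
proof -
  have "(x - y) * (x + y) = 0" using assms(1) by (simp add: algebra_simps power2_eq_square)
  moreover have "x + y \<noteq> 0"
  proof
    assume "x + y = 0"
    then have "(x + y) $ 0 = 0" by simp
    then show False using assms(2,3) by simp
  qed
  ultimately show ?thesis by simp
qed

lemma binom_sq:
  fixes A :: rat and k :: nat
  shows "(fps_binomial (- of_nat k / 2) oo (- fps_const A * fps_X))^2 = inverse (1 - fps_const A * fps_X) ^ k"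
proof -
  define Z :: "rat fps" where "Z = - fps_const A * fps_X"
  have Z0: "Z $ 0 = 0" by (simp add: Z_def)
  have "(fps_binomial (- of_nat k / 2) oo Z)^2 = fps_binomial (- of_nat k / 2)^2 oo Z"
    by (rule fps_compose_power[OF Z0])
  also have "fps_binomial (- of_nat k / 2 :: rat)^2 = fps_binomial (- of_nat k)"
    by (simp add: fps_binomial_power)
  also have "\<dots> = inverse ((1 + fps_X)^k)" by (rule fps_binomial_minus_of_nat)
  also have "inverse ((1 + fps_X)^k) oo Z = inverse ((1 + fps_X)^k oo Z)"
    by (rule fps_inverse_compose[OF Z0]) (simp add: fps_nth_power_0)
  also have "(1 + fps_X)^k oo Z = ((1 + fps_X) oo Z)^k"
    by (rule fps_compose_power[OF Z0, symmetric])
  also have "(1 + fps_X) oo Z = 1 + Z"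
    using Z0 by (simp add: fps_compose_add_distrib)
  also have "1 + Z = 1 - fps_const A * fps_X"
    unfolding Z_def by (simp only: mult_minus_left) (simp only: diff_conv_add_uminus)
  finally show ?thesis by (simp add: Z_def fps_inverse_power)
qed


theorem proposition4p4:
  fixes n l :: nat and a :: "nat \<Rightarrow> nat"
  assumes "n \<ge> 2" and "l \<ge> 1"
    and "\<And>k. k \<in> {1..l} \<Longrightarrow> a k \<ge> 2"
    and "(\<Sum>k=1..l. a k) = n"
  shows "(\<forall>p. n - l + 1 \<le> p \<and> p \<le> n - 1 \<longrightarrow> Iser l a n p = 1)
    \<and> (\<forall>p. p \<le> n - l \<longrightarrow> Iser l a n p = Iser l a n (n - l - p))
    \<and> (\<Prod>p=0..n-l. Iser l a n p) = inverse (1 - fps_const (of_nat (aa l a)) * fps_X)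
    \<and> (\<Prod>p=0..n-l. Iser l a n p ^ (n - l - p))
        = fps_binomial (- of_nat (n - l) / 2) oo (- fps_const (of_nat (aa l a)) * fps_X)"
proof -
  define F where "F = tildeF l a n"
  define cs where "cs = csl l a"
  define k where "k = length cs"
  define AA :: rat where "AA = of_nat (aa l a)"
  define Fp where "Fp p = (opM ^^ p) F" for p
  define I where "I p = at_w0 (Fp p)" for p
  define G where "G p = Gof (Fp p)" for p
  have a1: "\<And>j. j \<in> {1..l} \<Longrightarrow> a j \<ge> 1" using assms(3) by fastforce
  have kl: "k + l = n"
  proof -
    have "(\<Sum>j=1..l. a j - 1) + (\<Sum>j=1..l. (1::nat)) = (\<Sum>j=1..l. a j)"
      unfolding sum.distrib[symmetric]
    proof (rule sum.cong)
      fix j assume "j \<in> {1..l}"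
      then have "a j \<ge> 1" by (rule a1)
      then show "a j - 1 + 1 = a j" by simp
    qed simp
    then show ?thesis using assms(4) by (simp add: k_def cs_def csl_length)
  qed
  have nlk: "n - l = k" using kl by simp
  have IserI: "Iser l a n p = I p" for p by (simp add: Iser_def I_def Fp_def F_def)
  have F0: "F $ 0 = 1" by (simp add: F_def tildeF_0)
  have Fp0: "Fp p $ 0 = 1" for p
    by (induction p) (simp_all add: Fp_def F0 opM_0)
  have I0: "I p $ 0 = 1" for p by (simp add: I_def Fp0)
  have WF: "W * Fp (Suc p) = th (G p)" for p
    using W_opM[OF Fp0[of p]] by (simp add: Fp_def G_def)
  have Gd: "G p = Fp p * liftq (inverse (I p))" for p by (simp add: G_def Gof_def I_def)
  have chainF: "chainW I j F = W^j * G j" for j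
  proof (induction j)
    case 0
    then show ?case by (simp add: Gd Fp_def mult.commute)
  next
    case (Suc j)
    have "chainW I (Suc j) F = liftq (inverse (I (Suc j))) * th (W^j * G j)" by (simp add: Suc)
    also have "\<dots> = liftq (inverse (I (Suc j))) * (W^j * (W * Fp (Suc j)))" by (simp add: th_Wpow WF)
    also have "\<dots> = W^Suc j * G (Suc j)" by (simp add: Gd mult_ac)
    finally show ?case .
  qed
  obtain b where b: "\<forall>i>k. b i = 0" "\<forall>F. chainW I k F = popW b k F"
     "\<forall>s g. chainD s I k g = popD b k s g" "b k = (\<Prod>p\<le>k. inverse (I p))"
    using chain_pop by blast
  obtain ll where ll: "\<forall>i>k. ll i = 0" "\<forall>F. LW cs AA F = popW ll k F"
     "\<forall>s g. LD cs AA s g = popD ll k s g" "ll k = 1 - fps_const AA * fps_X"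
    using L_pop[of cs AA] unfolding k_def by blast
  define lA where "lA = (\<Prod>p\<le>k. inverse (I p))"
  define lL where "lL = 1 - fps_const AA * fps_X"
  have lL0: "lL \<noteq> 0"
  proof
    assume "lL = 0" then have "lL $ 0 = 0" by simp
    then show False by (simp add: lL_def)
  qed
  have kl': "length (csl l a) + l = n" using kl unfolding k_def cs_def .
  have LF: "LW cs AA F = W^k"
    unfolding F_def cs_def AA_def k_def by (rule LW_tildeF[OF a1 kl'])
  define beta where "beta i = lL * b i - lA * ll i" for i
  have bhi: "beta i = 0" if "k \<le> i" for i
  proof (cases "i = k")
    case True then show ?thesis using b(4) ll(4) by (simp add: beta_def lA_def lL_def mult.commute)
  next
    case False then show ?thesis using that b(1) ll(1) by (simp add: beta_def)
  qed
  have bF: "popW beta k F = W^k * (liftq lL * G k - liftq lA)"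
  proof -
    have "popW beta k F = liftq lL * popW b k F - liftq lA * popW ll k F"
    proof -
      have "beta = (\<lambda>i. lL * b i - lA * ll i)" by (rule ext) (simp add: beta_def)
      then show ?thesis by (simp add: mult_popW diff_popW)
    qed
    also have "\<dots> = liftq lL * (W^k * G k) - liftq lA * W^k"
    proof -
      have pb: "popW b k F = W^k * G k" using b(2)[rule_format, of F] chainF[of k] by simp
      have pl: "popW ll k F = W^k" using ll(2)[rule_format, of F] LF by simp
      show ?thesis by (simp add: pb pl)
    qed
    finally show ?thesis by (simp add: algebra_simps)
  qed
  have beta0: "beta i = 0" for i
  proof (rule uniq_pop[OF F0, of k beta k])
    fix d j assume "j < k"
    then show "(popW beta k F $ d) $ j = 0" by (simp add: bF W_pow_low)
  qed (simp_all add: bhi)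
  have "popW beta k F = 0" by (simp add: popW_def beta0)
  moreover have Wn: "W \<noteq> 0" by (simp add: W_def)
  ultimately have "liftq lL * G k - liftq lA = 0" by (simp add: bF)
  then have LG: "liftq lL * G k = liftq lA" by simp
  have atG: "at_w0 (G k) = 1" unfolding G_def by (rule at_w0_Gof) (simp add: Fp0)
  have lAL: "lA = lL"
    using arg_cong[OF LG, of at_w0] by (simp add: at_w0_mult atG)
  have Gk: "G k = 1"
  proof -
    have "liftq lL * (G k - 1) = 0" using LG lAL by (simp add: algebra_simps)
    moreover have "liftq lL \<noteq> 0" using lL0 liftq_eq_0 by blast
    ultimately show ?thesis by simp
  qed
  have bl: "b i = ll i" for i
  proof -
    have "lL * (b i - ll i) = 0" using beta0[of i] lAL by (simp add: beta_def algebra_simps)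
    then show ?thesis using lL0 by simp
  qed
  have prodI: "(\<Prod>p=0..k. I p) = inverse lL"
  proof -
    have "inverse (\<Prod>p=0..k. I p) = lA" by (simp add: lA_def inverse_prod atLeast0AtMost)
    then have "inverse (inverse (\<Prod>p=0..k. I p)) = inverse lL" using lAL by simp
    moreover have "(\<Prod>p=0..k. I p) $ 0 \<noteq> 0" by (simp add: prod_nth0 I0)
    ultimately show ?thesis by simp
  qed
  have Fp1: "Fp (Suc k + j) = 1" for j
  proof (induction j)
    case 0
    have "opM (Fp k) = 1" by (rule opM_eq_1) (use Gk in \<open>simp add: G_def\<close>)
    moreover have "Fp (Suc k + 0) = opM (Fp k)" by (simp add: Fp_def)
    ultimately show ?case by simp
  next
    case (Suc j)
    have "Fp (Suc k + Suc j) = opM (Fp (Suc k + j))" by (simp add: Fp_def)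
    then show ?case using Suc.IH by (simp add: opM_1)
  qed
  have c1: "I p = 1" if "k + 1 \<le> p" for p
  proof -
    have "p = Suc k + (p - Suc k)" using that by simp
    then have "Fp p = 1" using Fp1[of "p - Suc k"] by simp
    then show ?thesis by (simp add: I_def)
  qed
  have bll: "b = ll" by (rule ext) (rule bl)
  have DL: "chainD s I k g = LD cs AA s g" for s g using b(3) ll(3) bll by simp
  define R where "R p = I (k - p)" for p
  have Rf: "(\<lambda>p. I (k - p)) = R" by (rule ext) (simp add: R_def)
  obtain b' where b': "\<forall>s g. chainD s R k g = popD b' k s g" using chain_pop by blast
  have refl: "\<And>x. (\<Prod>c\<leftarrow>cs. x + c) = (\<Prod>c\<leftarrow>cs. x + 1 - c)" unfolding cs_def by (rule csl_refl[OF a1])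
  have key: "(chainD (- of_nat N) R k 1) $ d = (LD cs AA (- of_nat N) 1) $ d" if "d \<le> N" for N d
  proof -
    define f where "f = (fps_X ^ (N - d) :: rat fps)"
    have "(-1)^k * Pn N f (chainD (- of_nat N) R k 1) = Pn N (chainD 0 I k f) 1"
      using Pn_chain[of N 0 I k f 1] by (simp add: Rf)
    also have "\<dots> = Pn N (LD cs AA 0 f) 1" by (simp add: DL)
    also have "\<dots> = (-1)^k * Pn N f (LD cs AA (- of_nat N) 1)"
      using Pn_L[OF refl, of N AA 0 f 1] by (simp add: k_def)
    finally have "Pn N f (chainD (- of_nat N) R k 1) = Pn N f (LD cs AA (- of_nat N) 1)" by simp
    then show ?thesis using that by (simp add: f_def Pn_Xpow)
  qed
  have b'l: "b' i = ll i" if "i \<le> k" for i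
  proof (rule fps_ext)
    fix d
    have "\<forall>i\<le>k. b' i $ d - ll i $ d = 0"
    proof (rule poly_inf[of "(\<lambda>N. - of_nat N) ` {d..}"])
      have "inj_on (\<lambda>N::nat. - of_nat N :: rat) {d..}" by (simp add: inj_on_def)
      moreover have "infinite {d::nat..}" by (rule infinite_Ici)
      ultimately show "infinite ((\<lambda>N. - of_nat N :: rat) ` {d..})" by (simp add: finite_image_iff)
    next
      fix s assume "s \<in> (\<lambda>N. - of_nat N :: rat) ` {d..}"
      then obtain N where N: "d \<le> N" "s = - of_nat N" by auto
      have "popD b' k s 1 $ d = popD ll k s 1 $ d"
        using key[OF N(1)] b'[rule_format, of s 1] ll(3)[rule_format, of s 1] N(2) by simp
      then show "(\<Sum>i\<le>k. (b' i $ d - ll i $ d) * s ^ i) = 0"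
        by (simp add: popD_1_nth left_diff_distrib sum_subtractf)
    qed
    then show "b' i $ d = ll i $ d" using that by simp
  qed
  have RI: "\<forall>s g. chainD s R k g = chainD s I k g"
  proof (intro allI)
    fix s g
    have "popD b' k s g = popD b k s g" unfolding popD_def
      by (rule sum.cong) (simp_all add: b'l bll)
    then show "chainD s R k g = chainD s I k g" using b'[rule_format, of s g] b(3) by simp
  qed
  have R0: "\<forall>p\<le>k. R p $ 0 = 1" by (simp add: R_def I0)
  have I0': "\<forall>p\<le>k. I p $ 0 = 1" by (simp add: I0)
  have sym: "\<forall>p\<le>k. R p = I p" by (rule peel[OF R0 I0' RI])
  define x where "x = (\<Prod>p=0..k. I p ^ (k - p))"
  have xsq: "x^2 = inverse lL ^ k"
  proof -
    have "x = (\<Prod>p=0..k. I (k - p) ^ (k - (k - p)))"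
      unfolding x_def by (subst prod.atLeastAtMost_rev) simp
    also have "\<dots> = (\<Prod>p=0..k. I p ^ p)"
      by (rule prod.cong) (use sym in \<open>auto simp: R_def\<close>)
    finally have "x^2 = (\<Prod>p=0..k. I p ^ (k - p)) * (\<Prod>p=0..k. I p ^ p)"
      by (simp add: power2_eq_square x_def)
    also have "\<dots> = (\<Prod>p=0..k. I p ^ k)"
      by (simp add: prod.distrib[symmetric] power_add[symmetric])
    also have "\<dots> = inverse lL ^ k" by (subst prod_power_distrib[symmetric]) (simp add: prodI)
    finally show ?thesis .
  qed
  define y where "y = fps_binomial (- of_nat k / 2) oo (- fps_const AA * fps_X)"
  have ysq: "y^2 = inverse lL ^ k" unfolding y_def lL_def by (rule binom_sq)
  have x0: "x $ 0 = 1" by (simp add: x_def prod_nth0 fps_nth_power_0 I0)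
  have y0: "y $ 0 = 1" by (simp add: y_def)
  have xy: "x = y" by (rule sqrt_unique) (simp_all add: xsq ysq x0 y0)
  show ?thesis
  proof (intro conjI allI impI)
    fix p assume "n - l + 1 \<le> p \<and> p \<le> n - 1"
    then show "Iser l a n p = 1" by (simp add: IserI nlk c1)
  next
    fix p assume "p \<le> n - l"
    then show "Iser l a n p = Iser l a n (n - l - p)" using sym by (simp add: IserI nlk R_def)
  next
    show "(\<Prod>p=0..n-l. Iser l a n p) = inverse (1 - fps_const (of_nat (aa l a)) * fps_X)"
      by (simp add: IserI nlk prodI lL_def AA_def)
  next
    show "(\<Prod>p=0..n-l. Iser l a n p ^ (n - l - p))
        = fps_binomial (- of_nat (n - l) / 2) oo (- fps_const (of_nat (aa l a)) * fps_X)"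
      using xy by (simp add: IserI nlk x_def y_def AA_def)
  qed
qed

end
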